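(* Let $R$ be a commutative ring with identity, let $\boldsymbol{u}=(u_0,u_1,\dots)\in H_R$, and let $q(x)=\tau(x\boldsymbol{u})=(q_n(x))_{n\ge0}$, with $q_0(x)=1$ and $q_n(x)=\sum_{i=1}^nc_{i,n}x^i$ for $n\ge1$. Then $u_0=c_{1,1}$ and for every $m\ge2$, $$u_{m-1}=c_{1,m}+\sum_{\substack{k\mid m\\ k\neq1,m}}\frac{(-1)^{m/k}\,m!}{\frac{m}{k}\,(k!)^{m/k}}\,u_{k-1}.$$ In particular $u_{p-1}=c_{1,p}$ for every prime $p$.
   Context: $H_S$: sequences in a commutative ring $S$; $U_S$: those with first term $1$, a group under the Hurwitz product $(\boldsymbol{a}\star\boldsymbol{b})_n=\sum_{h=0}^n\binom{n}{h}a_hb_{n-h}$. Powers: for $\boldsymbol a=(1,a_1,\dots)\in U_S$ and $z\in S$, $\boldsymbol a^z[n]=\sum_{k=0}^nY_{n,k}(a_1,\dots,a_{n-k+1})\,z(z-1)\cdots(z-k+1)$ with $Y_{n,k}(y_1,y_2,\dots)=\sum\frac{n!}{\prod_l j_l!(l!)^{j_l}}\prod_ly_l^{j_l}$ over nonnegative $(j_l)$, $\sum j_l=k$, $\sum lj_l=n$ ($Y_{0,0}=1$, $Y_{n,0}=0$ for $n\ge1$); over $\mathbb Q$-algebras this is the sequence with e.g.f. $A(t)^z$. $\boldsymbol{b}^{(1)}=(1,1,1,\dots)$; for $i\ge2$, $\boldsymbol{b}^{(i)}$ has entries $1$ at positions $0$ and $i$, $0$ elsewhere. For $\boldsymbol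 z\in H_S$, $\tau(\boldsymbol z)\in U_S$ is the sequence whose first $n$ terms, for each $n\ge2$, are those of $(\boldsymbol{b}^{(1)})^{z_0}\star\cdots\star(\boldsymbol{b}^{(n-1)})^{z_{n-2}}$. Here $S=R[x]$ and $x\boldsymbol u=(xu_0,xu_1,\dots)$. *)

theory Defs
  imports "HOL-Computational_Algebra.Polynomial" "HOL-Computational_Algebra.Primes"
begin

definition hurwitz_prod :: "(nat \<Rightarrow> 'a::comm_ring_1) \<Rightarrow> (nat \<Rightarrow> 'a) \<Rightarrow> nat \<Rightarrow> 'a" where
  "hurwitz_prod a b n = (\<Sum>h\<le>n. of_nat (n choose h) * a h * b (n - h))"

definition hurwitz_one :: "nat \<Rightarrow> 'a::comm_ring_1" where
  "hurwitz_one n = (if n = 0 then 1 else 0)"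

definition hurwitz_prod_list :: "(nat \<Rightarrow> 'a::comm_ring_1) list \<Rightarrow> nat \<Rightarrow> 'a" where
  "hurwitz_prod_list xs = foldr hurwitz_prod xs hurwitz_one"

text \<open>Partial Bell polynomial Y_{n,k}(y_1,y_2,...), the sum ranging over
  nonnegative (j_l)_{l\<ge>1} with sum j_l = k and sum l j_l = n (so j_l = 0 for l > n).\<close>
definition bell_tuples :: "nat \<Rightarrow> nat \<Rightarrow> (nat \<Rightarrow> nat) set" where
  "bell_tuples n k = {j. (\<forall>l. l \<notin> {1..n} \<longrightarrow> j l = 0)
       \<and> (\<Sum>l\<in>{1..n}. j l) = k \<and> (\<Sum>l\<in>{1..n}. l * j l) = n}"

definition partial_bell :: "nat \<Rightarrow> nat \<Rightarrow> (nat \<Rightarrow> 'a::comm_ring_1) \<Rightarrow> 'a" where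
  "partial_bell n k y = (\<Sum>j\<in>bell_tuples n k.
      of_nat (fact n div (\<Prod>l\<in>{1..n}. fact (j l) * fact l ^ j l)) * (\<Prod>l\<in>{1..n}. y l ^ j l))"

text \<open>Power a^z of a sequence a = (1,a_1,...) in U_S, for z in S.\<close>
definition hurwitz_pow :: "(nat \<Rightarrow> 'a::comm_ring_1) \<Rightarrow> 'a \<Rightarrow> nat \<Rightarrow> 'a" where
  "hurwitz_pow a z n = (\<Sum>k\<le>n. partial_bell n k a * (\<Prod>i<k. z - of_nat i))"

definition bseq :: "nat \<Rightarrow> nat \<Rightarrow> 'a::comm_ring_1" where
  "bseq i n = (if i = 1 then 1 else if n = 0 \<or> n = i then 1 else 0)"

definition tau_partial :: "(nat \<Rightarrow> 'a::comm_ring_1) \<Rightarrow> nat \<Rightarrow> nat \<Rightarrow> 'a" where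
  "tau_partial z N = hurwitz_prod_list (map (\<lambda>i. hurwitz_pow (bseq i) (z (i - 1))) [1..<N+1])"

text \<open>tau(z): for each n \<ge> 2 its first n terms are those of P_{n-1}. The m-th term is
  read off from P_{n-1} with n = max 2 (m+1), i.e. from P_{max 1 m}.\<close>
definition tau :: "(nat \<Rightarrow> 'a::comm_ring_1) \<Rightarrow> nat \<Rightarrow> 'a" where
  "tau z m = tau_partial z (max 1 m) m"

definition xseq :: "(nat \<Rightarrow> 'a::comm_ring_1) \<Rightarrow> nat \<Rightarrow> 'a poly" where
  "xseq u n = [:0, 1:] * [:u n:]"

end

theory Submission imports Defs "HOL-Library.FuncSet" begin

lemma coeff_ofnat_mult: "coeff (of_nat c * p) i = of_nat c * coeff (p::'a::comm_ring_1 poly) i"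
  by (metis coeff_smult of_nat_poly smult_conv_map_poly map_poly_pCons  mult_smult_left mult_1 smult_one)

lemma of_nat_mult_smult: "of_nat c * p = smult (of_nat c) (p::'a::comm_ring_1 poly)"
  by (simp add: of_nat_poly)

lemma coeff_of_nat_0: "coeff (of_nat c :: 'a::comm_ring_1 poly) 0 = of_nat c"
  by (simp add: of_nat_poly)

lemma coeff_mult_1: "coeff (p * q) 1 = coeff p 0 * coeff q 1 + coeff p 1 * coeff (q::'a::comm_ring_1 poly) 0"
  by (simp add: coeff_mult)

lemma hprod_coeff:
  fixes a b :: "nat \<Rightarrow> 'a::comm_ring_1 poly"
  assumes a0: "\<And>n. coeff (a n) 0 = hurwitz_one n" and b0: "\<And>n. coeff (b n) 0 = hurwitz_one n"
  shows "coeff (hurwitz_prod a b n) 0 = hurwitz_one n \<and> coeff (hurwitz_prod a b n) 1 = coeff (a n) 1 + coeff (b n) 1"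
proof
  have "coeff (hurwitz_prod a b n) 0 = (\<Sum>h\<le>n. of_nat (n choose h) * (hurwitz_one h * hurwitz_one (n-h)))"
    unfolding hurwitz_prod_def coeff_sum
    by (intro sum.cong) (simp_all add: of_nat_mult_smult a0 b0 coeff_mult_0)
  also have "\<dots> = (\<Sum>h\<le>n. if h = 0 then (if n = 0 then 1 else 0) else 0)"
    by (intro sum.cong) (auto simp: hurwitz_one_def)
  also have "\<dots> = hurwitz_one n" by (simp add: hurwitz_one_def)
  finally show "coeff (hurwitz_prod a b n) 0 = hurwitz_one n" .
  have "coeff (hurwitz_prod a b n) 1 = (\<Sum>h\<le>n. of_nat (n choose h) * (hurwitz_one h * coeff (b (n-h)) 1)
        + of_nat (n choose h) * (coeff (a h) 1 * hurwitz_one (n-h)))"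
    unfolding hurwitz_prod_def coeff_sum
    by (intro sum.cong) (simp_all add: of_nat_mult_smult coeff_mult_1[simplified] a0 b0 distrib_left)
  also have "\<dots> = (\<Sum>h\<le>n. if h = 0 then coeff (b n) 1 else 0) + (\<Sum>h\<le>n. if h = n then coeff (a n) 1 else 0)"
    unfolding sum.distrib[symmetric]
    by (intro sum.cong) (auto simp: hurwitz_one_def)
  also have "\<dots> = coeff (a n) 1 + coeff (b n) 1" by simp
  finally show "coeff (hurwitz_prod a b n) 1 = coeff (a n) 1 + coeff (b n) 1" .
qed

lemma hprod_list_coeff:
  fixes xs :: "(nat \<Rightarrow> 'a::comm_ring_1 poly) list"
  assumes "\<And>a n. a \<in> set xs \<Longrightarrow> coeff (a n) 0 = hurwitz_one n"
  shows "coeff (hurwitz_prod_list xs n) 0 = hurwitz_one n \<and> coeff (hurwitz_prod_list xs n) 1 = (\<Sum>a\<leftarrow>xs. coeff (a n) 1)"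
  using assms
proof (induction xs arbitrary: n)
  case Nil
  then show ?case by (simp add: hurwitz_prod_list_def hurwitz_one_def)
next
  case (Cons x xs)
  have h: "\<And>n. coeff (hurwitz_prod_list xs n) 0 = hurwitz_one n" using Cons by auto
  have "hurwitz_prod_list (x # xs) = hurwitz_prod x (hurwitz_prod_list xs)"
    by (simp add: hurwitz_prod_list_def)
  then show ?case using hprod_coeff[of x "hurwitz_prod_list xs" n] Cons h by auto
qed


definition DD :: "nat \<Rightarrow> (nat \<Rightarrow> nat) \<Rightarrow> nat" where
  "DD N j = (\<Prod>l\<in>{1..N}. fact (j l) * fact l ^ j l)"

lemma bt_support: "j \<in> bell_tuples n k \<Longrightarrow> l \<notin> {1..n} \<Longrightarrow> j l = 0"
  by (simp add: bell_tuples_def)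

lemma bt_finite: "finite (bell_tuples n k)"
proof -
  let ?F = "\<lambda>f l. if l \<in> {1..n} then f l else (0::nat)"
  have "bell_tuples n k \<subseteq> ?F ` (PiE {1..n} (\<lambda>_. {0..k}))"
  proof
    fix j assume j: "j \<in> bell_tuples n k"
    have le: "j l \<le> k" if "l \<in> {1..n}" for l
    proof -
      have "j l \<le> (\<Sum>l\<in>{1..n}. j l)" by (rule member_le_sum) (use that in auto)
      then show ?thesis using j by (simp add: bell_tuples_def)
    qed
    have "j = ?F (restrict j {1..n})"
      using bt_support[OF j] by (auto simp: fun_eq_iff restrict_apply)
    moreover have "restrict j {1..n} \<in> PiE {1..n} (\<lambda>_. {0..k})" using le by auto
    ultimately show "j \<in> ?F ` (PiE {1..n} (\<lambda>_. {0..k}))" by blast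
  qed
  moreover have "finite (?F ` (PiE {1..n} (\<lambda>_. {0..k})))" by (intro finite_imageI finite_PiE) auto
  ultimately show ?thesis by (rule finite_subset)
qed

lemma sum_supp_eq:
  fixes g :: "nat \<Rightarrow> 'b::comm_monoid_add"
  assumes "\<And>l. j l = 0 \<Longrightarrow> g l = 0" "\<forall>l. l \<notin> {1..min M N} \<longrightarrow> j l = 0"
  shows "sum g {1..M} = sum g {1..N}"
proof -
  have "sum g {1..M} = sum g {1..min M N}"
    by (rule sum.mono_neutral_right) (use assms in auto)
  also have "\<dots> = sum g {1..N}"
    by (rule sum.mono_neutral_left) (use assms in auto)
  finally show ?thesis .
qed

lemma prod_supp_eq:
  fixes g :: "nat \<Rightarrow> 'b::comm_monoid_mult"
  assumes "\<And>l. j l = 0 \<Longrightarrow> g l = 1" "\<forall>l. l \<notin> {1..min M N} \<longrightarrow> j l = 0"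
  shows "prod g {1..M} = prod g {1..N}"
proof -
  have "prod g {1..M} = prod g {1..min M N}"
    by (rule prod.mono_neutral_right) (use assms in auto)
  also have "\<dots> = prod g {1..N}"
    by (rule prod.mono_neutral_left) (use assms in auto)
  finally show ?thesis .
qed

lemma bt_iff:
  assumes sup: "\<forall>l. l \<notin> {1..M} \<longrightarrow> j l = 0"
  shows "j \<in> bell_tuples n k \<longleftrightarrow> (\<Sum>l\<in>{1..M}. j l) = k \<and> (\<Sum>l\<in>{1..M}. l * j l) = n"
proof
  assume j: "j \<in> bell_tuples n k"
  have s: "\<forall>l. l \<notin> {1..min M n} \<longrightarrow> j l = 0"
  proof (intro allI impI)
    fix l assume "l \<notin> {1..min M n}"
    then have "l \<notin> {1..M} \<or> l \<notin> {1..n}" by auto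
    then show "j l = 0" using sup bt_support[OF j, of l] by blast
  qed
  have e1: "(\<Sum>l\<in>{1..M}. j l) = (\<Sum>l\<in>{1..n}. j l)" by (rule sum_supp_eq[OF _ s]) simp
  have e2: "(\<Sum>l\<in>{1..M}. l * j l) = (\<Sum>l\<in>{1..n}. l * j l)" by (rule sum_supp_eq[OF _ s]) simp
  show "(\<Sum>l\<in>{1..M}. j l) = k \<and> (\<Sum>l\<in>{1..M}. l * j l) = n"
    using e1 e2 j unfolding bell_tuples_def by simp
next
  assume h: "(\<Sum>l\<in>{1..M}. j l) = k \<and> (\<Sum>l\<in>{1..M}. l * j l) = n"
  have le: "l \<le> n" if "j l \<noteq> 0" for l
  proof -
    have l: "l \<in> {1..M}" using spec[OF sup, of l] that by auto
    have "l \<le> l * j l" using that by simp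
    also have "\<dots> \<le> (\<Sum>l\<in>{1..M}. l * j l)" by (rule member_le_sum) (use l in auto)
    finally show ?thesis using h by simp
  qed
  have s: "\<forall>l. l \<notin> {1..min M n} \<longrightarrow> j l = 0"
  proof (intro allI impI)
    fix l assume "l \<notin> {1..min M n}"
    then show "j l = 0" using sup le by (cases "l \<in> {1..M}") auto
  qed
  have s2: "\<forall>l. l \<notin> {1..n} \<longrightarrow> j l = 0" using s by auto
  have e1: "(\<Sum>l\<in>{1..M}. j l) = (\<Sum>l\<in>{1..n}. j l)" by (rule sum_supp_eq[OF _ s]) simp
  have e2: "(\<Sum>l\<in>{1..M}. l * j l) = (\<Sum>l\<in>{1..n}. l * j l)" by (rule sum_supp_eq[OF _ s]) simp
  show "j \<in> bell_tuples n k"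
    using e1 e2 h s2 unfolding bell_tuples_def by simp
qed

lemma DD_supp:
  assumes "\<forall>l. l \<notin> {1..min M N} \<longrightarrow> j l = 0"
  shows "DD M j = DD N j"
  unfolding DD_def by (rule prod_supp_eq[of j, OF _ assms]) simp

lemma DD_pos: "DD N j > 0"
  unfolding DD_def by (intro prod_pos) simp

lemma sum_upd: "finite A \<Longrightarrow> l \<in> A \<Longrightarrow> sum (g(l := v)) A = sum g (A - {l}) + (v::'b::comm_monoid_add)"
  by (simp add: sum.remove add.commute)

lemma prod_upd: "finite A \<Longrightarrow> l \<in> A \<Longrightarrow> prod (g(l := v)) A = prod g (A - {l}) * (v::'b::comm_monoid_mult)"
  by (simp add: prod.remove mult.commute)

lemma fact_block_dvd:
  assumes "l \<ge> 1"
  shows "fact r * fact l ^ r dvd (fact (r * l) :: nat)"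
proof (induction r)
  case 0
  then show ?case by simp
next
  case (Suc r)
  obtain N where N_def: "N = Suc r * l" by blast
  have lN: "l \<le> N" by (simp add: N_def)
  have f: "fact l * fact (N - l) * (N choose l) = (fact N :: nat)" by (rule binomial_fact_lemma[OF lN])
  have Nl: "N - l = r * l" by (simp add: N_def)
  have "Suc (N - 1) * ((N - 1) choose (l - 1)) = (Suc (N - 1) choose Suc (l - 1)) * Suc (l - 1)"
    by (rule Suc_times_binomial_eq)
  moreover have "Suc (N - 1) = N" "Suc (l - 1) = l" using assms by (auto simp: N_def)
  ultimately have "N * ((N - 1) choose (l - 1)) = (N choose l) * l" by simp
  hence "l * (Suc r * ((N - 1) choose (l - 1))) = l * (N choose l)"
    unfolding N_def by (simp only: mult.assoc mult.commute mult.left_commute)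
  hence c: "N choose l = Suc r * ((N - 1) choose (l - 1))" using assms by simp
  define C where "C = (N - 1) choose (l - 1)"
  have e1: "fact N = fact (r * l) * (fact l * Suc r) * C"
    using f Nl c unfolding C_def by (simp only: mult.assoc mult.commute mult.left_commute)
  have e2: "fact (Suc r) * fact l ^ Suc r = (fact r * fact l ^ r) * (fact l * Suc r :: nat)"
    by (simp only: fact_Suc power_Suc of_nat_id mult.assoc mult.commute mult.left_commute)
  have "(fact r * fact l ^ r) * (fact l * Suc r) dvd fact (r * l) * (fact l * Suc r)"
    using Suc.IH by (rule mult_dvd_mono) simp
  hence "fact (Suc r) * fact l ^ Suc r dvd fact (r * l) * (fact l * Suc r) * C" unfolding e2 by (rule dvd_mult2)
  hence "fact (Suc r) * fact l ^ Suc r dvd (fact N :: nat)" unfolding e1 .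
  then show ?case by (simp only: N_def)
qed

lemma sum_upd2:
  fixes h :: "nat \<Rightarrow> nat \<Rightarrow> 'b::comm_monoid_add"
  assumes "finite A" "l \<in> A"
  shows "(\<Sum>x\<in>A. h x ((g(l:=v)) x)) + h l (g l) = (\<Sum>x\<in>A. h x (g x)) + h l v"
proof -
  have "(\<Sum>x\<in>A. h x ((g(l:=v)) x)) = h l v + (\<Sum>x\<in>A-{l}. h x ((g(l:=v)) x))"
    using assms by (simp add: sum.remove)
  also have "(\<Sum>x\<in>A-{l}. h x ((g(l:=v)) x)) = (\<Sum>x\<in>A-{l}. h x (g x))"
    by (rule sum.cong) auto
  finally have 1: "(\<Sum>x\<in>A. h x ((g(l:=v)) x)) = h l v + (\<Sum>x\<in>A-{l}. h x (g x))" .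
  have 2: "(\<Sum>x\<in>A. h x (g x)) = h l (g l) + (\<Sum>x\<in>A-{l}. h x (g x))"
    using assms by (simp add: sum.remove)
  show ?thesis unfolding 1 2 by (simp add: ac_simps)
qed

lemma prod_upd2:
  fixes h :: "nat \<Rightarrow> nat \<Rightarrow> 'b::comm_monoid_mult"
  assumes "finite A" "l \<in> A"
  shows "(\<Prod>x\<in>A. h x ((g(l:=v)) x)) * h l (g l) = (\<Prod>x\<in>A. h x (g x)) * h l v"
proof -
  have "(\<Prod>x\<in>A. h x ((g(l:=v)) x)) = h l v * (\<Prod>x\<in>A-{l}. h x ((g(l:=v)) x))"
    using assms by (simp add: prod.remove)
  also have "(\<Prod>x\<in>A-{l}. h x ((g(l:=v)) x)) = (\<Prod>x\<in>A-{l}. h x (g x))"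
    by (rule prod.cong) auto
  finally have 1: "(\<Prod>x\<in>A. h x ((g(l:=v)) x)) = h l v * (\<Prod>x\<in>A-{l}. h x (g x))" .
  have 2: "(\<Prod>x\<in>A. h x (g x)) = h l (g l) * (\<Prod>x\<in>A-{l}. h x (g x))"
    using assms by (simp add: prod.remove)
  show ?thesis unfolding 1 2 by (simp add: ac_simps)
qed

lemma DD_upd: "l \<in> {1..N} \<Longrightarrow> DD N (j(l:=v)) * (fact (j l) * fact l ^ j l) = DD N j * (fact v * fact l ^ v)"
  unfolding DD_def using prod_upd2[of "{1..N}" l "\<lambda>x y. fact y * fact x ^ y" j v] by simp

lemma DD_dvd: "j \<in> bell_tuples n k \<Longrightarrow> DD n j dvd fact n"
proof (induction n arbitrary: j k rule: less_induct)
  case (less n)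
  note j = less.prems
  show ?case
  proof (cases "\<forall>l. j l = 0")
    case True
    then have "DD n j = 1" unfolding DD_def by simp
    then show ?thesis by simp
  next
    case False
    then obtain l where jl: "j l \<noteq> 0" by blast
    have l: "l \<in> {1..n}" using bt_support[OF j, of l] jl by blast
    define r where "r = j l"
    define j2 where "j2 = j(l := 0)"
    have s1: "(\<Sum>x\<in>{1..n}. j x) = k" "(\<Sum>x\<in>{1..n}. x * j x) = n"
      using j by (auto simp: bell_tuples_def)
    have a1: "(\<Sum>x\<in>{1..n}. j2 x) + r = k"
      using sum_upd2[of "{1..n}" l "\<lambda>x y. y" j 0] l s1 by (simp add: j2_def r_def)
    have a2: "(\<Sum>x\<in>{1..n}. x * j2 x) + l * r = n"
      using sum_upd2[of "{1..n}" l "\<lambda>x y. x * y" j 0] l s1 by (simp add: j2_def r_def)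
    have sup2: "\<forall>x. x \<notin> {1..n} \<longrightarrow> j2 x = 0" using bt_support[OF j] by (simp add: j2_def)
    have j2: "j2 \<in> bell_tuples (n - r * l) (k - r)"
    proof -
      have b1: "(\<Sum>x\<in>{1..n}. j2 x) = k - r" using a1 by linarith
      have b2: "(\<Sum>x\<in>{1..n}. x * j2 x) = n - r * l" using a2 by (metis add_diff_cancel_right' mult.commute)
      show ?thesis using bt_iff[OF sup2, of "n - r * l" "k - r"] b1 b2 by blast
    qed
    have rpos: "r \<ge> 1" using jl r_def by simp
    have lpos: "l \<ge> 1" using l by simp
    have p: "0 < r * l" using rpos lpos by simp
    have rl: "r * l \<le> n" using a2 by (simp add: mult.commute)
    have lt: "n - r * l < n" using p rl by (intro diff_less) (use p rl in linarith)+
    have IH: "DD (n - r * l) j2 dvd fact (n - r * l)" using less.IH[OF lt j2] .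
    have "\<forall>x. x \<notin> {1..min n (n - r * l)} \<longrightarrow> j2 x = 0"
      using bt_support[OF j2] by simp
    then have D2: "DD n j2 = DD (n - r * l) j2" by (rule DD_supp)
    have "DD n j2 * (fact (j l) * fact l ^ j l) = DD n j * (fact 0 * fact l ^ 0)"
      unfolding j2_def by (rule DD_upd[OF l])
    then have D: "DD n j = DD (n - r * l) j2 * (fact r * fact l ^ r)" using D2 by (simp add: r_def)
    have F: "fact (r * l) * fact (n - r * l) * (n choose (r * l)) = (fact n :: nat)"
      by (rule binomial_fact_lemma[OF rl])
    have "DD (n - r * l) j2 * (fact r * fact l ^ r) dvd fact (n - r * l) * fact (r * l)"
      by (rule mult_dvd_mono[OF IH fact_block_dvd[OF lpos]])
    then have "DD n j dvd fact (n - r * l) * fact (r * l) * (n choose (r * l))"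
      unfolding D by (rule dvd_mult2)
    then show ?thesis unfolding F[symmetric] by (simp add: ac_simps)
  qed
qed


definition BB :: "nat \<Rightarrow> nat \<Rightarrow> nat" where
  "BB n k = (\<Sum>j\<in>bell_tuples n k. fact n div DD n j)"

lemma BB_rat: "(of_nat (BB n k) :: rat) = (\<Sum>j\<in>bell_tuples n k. fact n / of_nat (DD n j))"
  unfolding BB_def of_nat_sum
  by (intro sum.cong refl) (simp add: of_nat_of_nat_div DD_dvd)

lemma rec_l:
  assumes l: "l \<in> {1..Suc n}"
  shows "of_nat (n choose (l - 1)) * (\<Sum>j\<in>bell_tuples (Suc n - l) k. fact (Suc n - l) / of_nat (DD (Suc n - l) j) :: rat)
       = (\<Sum>j\<in>bell_tuples (Suc n) (Suc k). of_nat (l * j l) * fact n / of_nat (DD (Suc n) j))"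
proof -
  define T where "T = bell_tuples (Suc n - l) k"
  define S where "S = {j\<in>bell_tuples (Suc n) (Suc k). j l \<noteq> 0}"
  define inc where "inc = (\<lambda>j::nat\<Rightarrow>nat. j(l := Suc (j l)))"
  define dec where "dec = (\<lambda>j::nat\<Rightarrow>nat. j(l := j l - 1))"
  have fin: "finite {1..Suc n}" by simp
  have mem_inc: "inc j \<in> S" if j: "j \<in> T" for j
  proof -
    have supj: "\<forall>x. x \<notin> {1..Suc n} \<longrightarrow> j x = 0" using bt_support[OF j[unfolded T_def]] by auto
    have sj: "(\<Sum>x\<in>{1..Suc n}. j x) = k \<and> (\<Sum>x\<in>{1..Suc n}. x * j x) = Suc n - l"
      using bt_iff[OF supj] j T_def by blast
    have sup: "\<forall>x. x \<notin> {1..Suc n} \<longrightarrow> inc j x = 0" using supj l by (auto simp: inc_def)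
    have a1: "(\<Sum>x\<in>{1..Suc n}. inc j x) + j l = (\<Sum>x\<in>{1..Suc n}. j x) + Suc (j l)"
      using sum_upd2[OF fin l, of "\<lambda>x y. y" j "Suc (j l)"] by (simp add: inc_def)
    have a2: "(\<Sum>x\<in>{1..Suc n}. x * inc j x) + l * j l = (\<Sum>x\<in>{1..Suc n}. x * j x) + l * Suc (j l)"
      using sum_upd2[OF fin l, of "\<lambda>x y. x * y" j "Suc (j l)"] by (simp add: inc_def)
    have ll: "l \<le> Suc n" using l by simp
    have "(\<Sum>x\<in>{1..Suc n}. inc j x) = Suc k" using a1 sj by linarith
    moreover have "(\<Sum>x\<in>{1..Suc n}. x * inc j x) = Suc n" using a2 sj ll mult_Suc_right[of l "j l"] by linarith
    ultimately have "inc j \<in> bell_tuples (Suc n) (Suc k)" using bt_iff[OF sup] by blast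
    then show ?thesis by (simp add: S_def inc_def)
  qed
  have mem_dec: "dec j \<in> T" if j: "j \<in> S" for j
  proof -
    have j1: "j \<in> bell_tuples (Suc n) (Suc k)" and jl: "j l \<noteq> 0" using j by (auto simp: S_def)
    have supj: "\<forall>x. x \<notin> {1..Suc n} \<longrightarrow> j x = 0" using bt_support[OF j1] by auto
    have sj: "(\<Sum>x\<in>{1..Suc n}. j x) = Suc k \<and> (\<Sum>x\<in>{1..Suc n}. x * j x) = Suc n"
      using bt_iff[OF supj] j1 by blast
    have sup: "\<forall>x. x \<notin> {1..Suc n} \<longrightarrow> dec j x = 0" using supj l by (auto simp: dec_def)
    have a1: "(\<Sum>x\<in>{1..Suc n}. dec j x) + j l = (\<Sum>x\<in>{1..Suc n}. j x) + (j l - 1)"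
      using sum_upd2[OF fin l, of "\<lambda>x y. y" j "j l - 1"] by (simp add: dec_def)
    have a2: "(\<Sum>x\<in>{1..Suc n}. x * dec j x) + l * j l = (\<Sum>x\<in>{1..Suc n}. x * j x) + l * (j l - 1)"
      using sum_upd2[OF fin l, of "\<lambda>x y. x * y" j "j l - 1"] by (simp add: dec_def)
    have e: "l * j l = l * (j l - 1) + l" using jl by (cases "j l") auto
    have "(\<Sum>x\<in>{1..Suc n}. dec j x) = k" using a1 sj jl by linarith
    moreover have "(\<Sum>x\<in>{1..Suc n}. x * dec j x) = Suc n - l" using a2 sj e by linarith
    ultimately have "dec j \<in> bell_tuples (Suc n - l) k" using bt_iff[OF sup] by blast
    then show ?thesis by (simp add: T_def)
  qed
  have val: "of_nat (n choose (l - 1)) * (fact (Suc n - l) / of_nat (DD (Suc n - l) (dec j)) :: rat)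
        = of_nat (l * j l) * fact n / of_nat (DD (Suc n) j)" if j: "j \<in> S" for j
  proof -
    have jl: "j l \<noteq> 0" using j by (auto simp: S_def)
    have dT: "dec j \<in> T" by (rule mem_dec[OF j])
    have "\<forall>x. x \<notin> {1..min (Suc n - l) (Suc n)} \<longrightarrow> dec j x = 0"
      using bt_support[OF dT[unfolded T_def]] by auto
    then have D1: "DD (Suc n - l) (dec j) = DD (Suc n) (dec j)" by (rule DD_supp)
    have "DD (Suc n) (dec j) * (fact (j l) * fact l ^ j l) = DD (Suc n) j * (fact (j l - 1) * fact l ^ (j l - 1))"
      unfolding dec_def by (rule DD_upd[OF l])
    moreover have "fact (j l) * fact l ^ j l = (j l * fact l) * (fact (j l - 1) * fact l ^ (j l - 1) :: nat)"
      using jl by (cases "j l") (auto simp: algebra_simps)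
    moreover have "fact (j l - 1) * fact l ^ (j l - 1) > (0::nat)" by simp
    ultimately have D2: "DD (Suc n) j = DD (Suc n) (dec j) * (j l * fact l)" by simp
    have l1: "l - 1 \<le> n" using l by auto
    have B: "fact (l - 1) * fact (n - (l - 1)) * (n choose (l - 1)) = (fact n :: nat)"
      by (rule binomial_fact_lemma[OF l1])
    have e1: "n - (l - 1) = Suc n - l" using l by auto
    have e2: "fact l = l * (fact (l - 1) :: nat)" using l by (cases l) auto
    define X where "X = (of_nat (DD (Suc n) (dec j)) :: rat)"
    have Xp: "X \<noteq> 0" using DD_pos unfolding X_def by (metis of_nat_0_eq_iff less_numeral_extra(3))
    have Bq: "(fact (l - 1) :: rat) * fact (Suc n - l) * of_nat (n choose (l - 1)) = fact n"
      using B e1 by (metis of_nat_fact of_nat_mult)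
    have lq: "(of_nat l :: rat) \<noteq> 0" "(of_nat (j l) :: rat) \<noteq> 0" "(fact (l - 1) :: rat) \<noteq> 0" using l jl by auto
    have "DD (Suc n) j = DD (Suc n) (dec j) * j l * l * fact (l - 1)" using D2 e2 by (simp only: mult.assoc)
    then have "of_nat (DD (Suc n) j) = X * of_nat (j l) * of_nat l * (fact (l - 1) :: rat)"
      unfolding X_def by (simp only: of_nat_mult of_nat_fact)
    then show ?thesis unfolding D1 X_def[symmetric] using Xp lq Bq[symmetric]
      by (simp add: field_simps)
  qed
  have "(\<Sum>j\<in>T. of_nat (n choose (l - 1)) * (fact (Suc n - l) / of_nat (DD (Suc n - l) j) :: rat))
      = (\<Sum>j\<in>S. of_nat (n choose (l - 1)) * (fact (Suc n - l) / of_nat (DD (Suc n - l) (dec j))))"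
  proof (rule sum.reindex_bij_witness[where i = dec and j = inc])
    fix a assume "a \<in> T" then show "dec (inc a) = a" by (simp add: inc_def dec_def fun_eq_iff)
  next
    fix a assume "a \<in> T" then show "inc a \<in> S" by (rule mem_inc)
  next
    fix b assume "b \<in> S" then show "inc (dec b) = b" by (auto simp: inc_def dec_def fun_eq_iff S_def)
  next
    fix b assume "b \<in> S" then show "dec b \<in> T" by (rule mem_dec)
  next
    fix a assume "a \<in> T" then show "of_nat (n choose (l - 1)) * (fact (Suc n - l) / of_nat (DD (Suc n - l) (dec (inc a)))) =
       of_nat (n choose (l - 1)) * (fact (Suc n - l) / of_nat (DD (Suc n - l) a) :: rat)"
      by (simp add: inc_def dec_def)
  qed
  also have "\<dots> = (\<Sum>j\<in>S. of_nat (l * j l) * fact n / of_nat (DD (Suc n) j))"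
    by (rule sum.cong[OF refl val])
  also have "\<dots> = (\<Sum>j\<in>bell_tuples (Suc n) (Suc k). of_nat (l * j l) * fact n / of_nat (DD (Suc n) j))"
    by (rule sum.mono_neutral_left) (auto simp: S_def bt_finite)
  finally show ?thesis by (simp add: T_def sum_distrib_left)
qed


lemma BB_rec: "BB (Suc n) (Suc k) = (\<Sum>i\<le>n. (n choose i) * BB (n - i) k)"
proof -
  have "(of_nat (\<Sum>i\<le>n. (n choose i) * BB (n - i) k) :: rat)
      = (\<Sum>i\<le>n. of_nat (n choose i) * (\<Sum>j\<in>bell_tuples (n - i) k. fact (n - i) / of_nat (DD (n - i) j)))"
    by (simp add: BB_rat)
  also have "\<dots> = (\<Sum>l\<in>{1..Suc n}. of_nat (n choose (l - 1)) *
        (\<Sum>j\<in>bell_tuples (Suc n - l) k. fact (Suc n - l) / of_nat (DD (Suc n - l) j)))"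
  proof -
    let ?F = "\<lambda>l. (of_nat (n choose (l - 1)) :: rat) *
        (\<Sum>j\<in>bell_tuples (Suc n - l) k. fact (Suc n - l) / of_nat (DD (Suc n - l) j))"
    have "sum ?F {Suc 0..Suc n} = sum (\<lambda>i. ?F (Suc i)) {0..n}" by (rule sum.shift_bounds_cl_Suc_ivl)
    then show ?thesis by (simp add: atMost_atLeast0)
  qed
  also have "\<dots> = (\<Sum>l\<in>{1..Suc n}. \<Sum>j\<in>bell_tuples (Suc n) (Suc k). of_nat (l * j l) * fact n / of_nat (DD (Suc n) j))"
    by (rule sum.cong[OF refl rec_l])
  also have "\<dots> = (\<Sum>j\<in>bell_tuples (Suc n) (Suc k). \<Sum>l\<in>{1..Suc n}. of_nat (l * j l) * fact n / of_nat (DD (Suc n) j))"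
    by (rule sum.swap)
  also have "\<dots> = (\<Sum>j\<in>bell_tuples (Suc n) (Suc k). of_nat (\<Sum>l\<in>{1..Suc n}. l * j l) * fact n / of_nat (DD (Suc n) j))"
    by (simp only: of_nat_sum sum_distrib_right sum_divide_distrib)
  also have "\<dots> = (\<Sum>j\<in>bell_tuples (Suc n) (Suc k). fact (Suc n) / of_nat (DD (Suc n) j))"
  proof (rule sum.cong[OF refl])
    fix j assume "j \<in> bell_tuples (Suc n) (Suc k)"
    then have "(\<Sum>l\<in>{1..Suc n}. l * j l) = Suc n" by (simp add: bell_tuples_def)
    then show "of_nat (\<Sum>l\<in>{1..Suc n}. l * j l) * fact n / of_nat (DD (Suc n) j) = (fact (Suc n) / of_nat (DD (Suc n) j) :: rat)"
      by (simp add: fact_Suc)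
  qed
  also have "\<dots> = of_nat (BB (Suc n) (Suc k))" by (simp add: BB_rat)
  finally show ?thesis by (simp only: of_nat_eq_iff)
qed

lemma bt_zero: "bell_tuples n 0 = (if n = 0 then {\<lambda>_. 0} else {})"
proof -
  have "j = (\<lambda>_. 0)" if "j \<in> bell_tuples n 0" for j
  proof
    fix l show "j l = 0"
      using that bt_support[OF that, of l] by (cases "l \<in> {1..n}") (auto simp: bell_tuples_def)
  qed
  moreover have "(\<lambda>_. 0) \<in> bell_tuples n 0 \<longleftrightarrow> n = 0" by (auto simp: bell_tuples_def)
  ultimately show ?thesis by auto
qed

lemma BB_zero: "BB n 0 = (if n = 0 then 1 else 0)"
  by (simp add: BB_def bt_zero DD_def)

lemma bt_empty: "k > n \<Longrightarrow> bell_tuples n k = {}"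
proof (rule ccontr)
  assume kn: "k > n" and "bell_tuples n k \<noteq> {}"
  then obtain j where j: "j \<in> bell_tuples n k" by blast
  have "(\<Sum>l\<in>{1..n}. j l) \<le> (\<Sum>l\<in>{1..n}. l * j l)" by (rule sum_mono) simp
  then show False using j kn by (simp add: bell_tuples_def)
qed

lemma BB_big: "k > n \<Longrightarrow> BB n k = 0"
  by (simp add: BB_def bt_empty)

lemma BB_falling:
  "(\<Sum>k\<le>n. of_nat (BB n k) * (\<Prod>i<k. z - of_nat i)) = (z :: 'a::comm_ring_1) ^ n"
proof (induction n arbitrary: z rule: less_induct)
  case (less n)
  show ?case
  proof (cases n)
    case 0
    then show ?thesis by (simp add: BB_zero)
  next
    case (Suc m)
    have "(\<Sum>k\<le>Suc m. of_nat (BB (Suc m) k) * (\<Prod>i<k. z - of_nat i))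
        = (\<Sum>k\<le>m. of_nat (BB (Suc m) (Suc k)) * (\<Prod>i<Suc k. z - of_nat i))"
      unfolding sum.atMost_Suc_shift[of _ m] by (simp add: BB_zero del: prod.lessThan_Suc)
    also have "\<dots> = (\<Sum>k\<le>m. (\<Sum>i\<le>m. of_nat (m choose i) * of_nat (BB (m - i) k)) * (z * (\<Prod>i<k. (z - 1) - of_nat i)))"
    proof (rule sum.cong[OF refl])
      fix k
      have "(\<Prod>i<Suc k. z - of_nat i) = z * (\<Prod>i<k. (z - 1) - of_nat i)"
        by (simp add: prod.lessThan_Suc_shift del: prod.lessThan_Suc) (simp add: algebra_simps)
      then show "of_nat (BB (Suc m) (Suc k)) * (\<Prod>i<Suc k. z - of_nat i) =
           (\<Sum>i\<le>m. of_nat (m choose i) * of_nat (BB (m - i) k)) * (z * (\<Prod>i<k. (z - 1) - of_nat i))"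
        by (simp add: BB_rec)
    qed
    also have "\<dots> = z * (\<Sum>i\<le>m. of_nat (m choose i) * (\<Sum>k\<le>m. of_nat (BB (m - i) k) * (\<Prod>i<k. (z - 1) - of_nat i)))"
    proof -
      have "(\<Sum>k\<le>m. (\<Sum>i\<le>m. of_nat (m choose i) * of_nat (BB (m - i) k)) * (z * (\<Prod>i<k. (z - 1) - of_nat i)))
          = (\<Sum>k\<le>m. \<Sum>i\<le>m. z * (of_nat (m choose i) * (of_nat (BB (m - i) k) * (\<Prod>i<k. (z - 1) - of_nat i))))"
        by (intro sum.cong refl) (simp add: sum_distrib_left sum_distrib_right mult_ac)
      also have "\<dots> = (\<Sum>i\<le>m. \<Sum>k\<le>m. z * (of_nat (m choose i) * (of_nat (BB (m - i) k) * (\<Prod>i<k. (z - 1) - of_nat i))))"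
        by (rule sum.swap)
      also have "\<dots> = z * (\<Sum>i\<le>m. of_nat (m choose i) * (\<Sum>k\<le>m. of_nat (BB (m - i) k) * (\<Prod>i<k. (z - 1) - of_nat i)))"
        by (simp only: sum_distrib_left)
      finally show ?thesis .
    qed
    also have "\<dots> = z * (\<Sum>i\<le>m. of_nat (m choose i) * (z - 1) ^ (m - i))"
    proof -
      have "(\<Sum>k\<le>m. of_nat (BB (m - i) k) * (\<Prod>i<k. (z - 1) - of_nat i)) = (z - 1) ^ (m - i)" if "i \<le> m" for i
      proof -
        have "(\<Sum>k\<le>m. of_nat (BB (m - i) k) * (\<Prod>i<k. (z - 1) - of_nat i))
            = (\<Sum>k\<le>m - i. of_nat (BB (m - i) k) * (\<Prod>i<k. (z - 1) - of_nat i))"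
          by (rule sum.mono_neutral_right) (auto simp: BB_big)
        also have "\<dots> = (z - 1) ^ (m - i)" by (rule less.IH) (use Suc in auto)
        finally show ?thesis .
      qed
      then show ?thesis by simp
    qed
    also have "\<dots> = z * (1 + (z - 1)) ^ m"
      using binomial_ring[of 1 "z - 1" m] by simp
    also have "\<dots> = z ^ Suc m" by simp
    finally show ?thesis using Suc by simp
  qed
qed


lemma pb_one: "partial_bell n k (bseq 1 :: nat \<Rightarrow> 'a::comm_ring_1) = of_nat (BB n k)"
  unfolding partial_bell_def BB_def of_nat_sum DD_def
  by (intro sum.cong refl) (simp add: bseq_def)

lemma hpow_one: "hurwitz_pow (bseq 1) z n = (z :: 'a::comm_ring_1) ^ n"
  unfolding hurwitz_pow_def pb_one by (rule BB_falling)

definition PB :: "nat \<Rightarrow> nat \<Rightarrow> nat \<Rightarrow> nat" where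
  "PB i n k = (if k = 0 then (if n = 0 then 1 else 0)
      else if n = i * k then fact n div (fact k * fact i ^ k) else 0)"

lemma pb_bseq:
  assumes i: "i \<ge> 2"
  shows "partial_bell n k (bseq i :: nat \<Rightarrow> 'a::comm_ring_1) = of_nat (PB i n k)"
proof (cases "k = 0")
  case True
  then show ?thesis by (simp add: partial_bell_def PB_def bt_zero)
next
  case False
  define e where "e = (\<lambda>l::nat. if l = i then k else 0)"
  define F where "F = (\<lambda>j. of_nat (fact n div (\<Prod>l\<in>{1..n}. fact (j l) * fact l ^ j l)) *
      (\<Prod>l\<in>{1..n}. (bseq i l :: 'a) ^ j l))"
  have zero: "F j = 0" if j: "j \<in> bell_tuples n k" and ne: "j \<noteq> e" for j
  proof -
    have "\<exists>l\<in>{1..n}. l \<noteq> i \<and> j l \<noteq> 0"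
    proof (rule ccontr)
      assume "\<not> ?thesis"
      then have z: "j l = 0" if "l \<noteq> i" for l using bt_support[OF j, of l] that by blast
      have "(\<Sum>l\<in>{1..n}. j l) = (\<Sum>l\<in>{1..n}. if l = i then j i else 0)"
        by (intro sum.cong refl) (use z in auto)
      also have "\<dots> = (if i \<in> {1..n} then j i else 0)" by simp
      finally have "(if i \<in> {1..n} then j i else 0) = k" using j by (simp add: bell_tuples_def)
      then have "j i = k" using False by (auto split: if_splits)
      then have "j = e" using z by (auto simp: e_def fun_eq_iff)
      then show False using ne by simp
    qed
    then obtain l where l: "l \<in> {1..n}" "l \<noteq> i" "j l \<noteq> 0" by blast
    have "bseq i l ^ j l = (0 :: 'a)" using l i by (simp add: bseq_def zero_power)
    then have "(\<Prod>l\<in>{1..n}. (bseq i l :: 'a) ^ j l) = 0" using l by (intro prod_zero) auto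
    then show ?thesis by (simp add: F_def)
  qed
  have "partial_bell n k (bseq i :: nat \<Rightarrow> 'a) = (\<Sum>j\<in>bell_tuples n k. F j)"
    by (simp add: partial_bell_def F_def)
  also have "\<dots> = (\<Sum>j\<in>bell_tuples n k. if j = e then F e else 0)"
    by (intro sum.cong refl) (use zero in auto)
  also have "\<dots> = (if e \<in> bell_tuples n k then F e else 0)"
    by (simp add: bt_finite)
  also have "\<dots> = of_nat (PB i n k)"
  proof -
    have s1: "(\<Sum>l\<in>{1..n}. e l) = (if i \<in> {1..n} then k else 0)" by (simp add: e_def)
    have s2: "(\<Sum>l\<in>{1..n}. l * e l) = (if i \<in> {1..n} then i * k else 0)"
      unfolding e_def by (simp add: if_distrib cong: if_cong)
    have sup: "(\<forall>l. l \<notin> {1..n} \<longrightarrow> e l = 0) \<longleftrightarrow> i \<in> {1..n}" using False by (auto simp: e_def)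
    have mem: "e \<in> bell_tuples n k \<longleftrightarrow> n = i * k"
    proof
      assume "e \<in> bell_tuples n k"
      then show "n = i * k" using s2 sup unfolding bell_tuples_def by auto
    next
      assume n: "n = i * k"
      have "i \<le> n" using n False by simp
      then have "i \<in> {1..n}" using i by simp
      then show "e \<in> bell_tuples n k" using s1 s2 sup n unfolding bell_tuples_def by auto
    qed
    have Fe: "F e = of_nat (fact n div (fact k * fact i ^ k))" if n: "n = i * k"
    proof -
      have iin: "i \<in> {1..n}" using n False i by simp
      have "(\<Prod>l\<in>{1..n}. fact (e l) * fact l ^ e l) = (\<Prod>l\<in>{1..n}. if l = i then fact k * fact i ^ k else (1::nat))"
        by (intro prod.cong refl) (simp add: e_def)
      also have "\<dots> = fact k * fact i ^ k" using iin by simp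
      finally have p1: "(\<Prod>l\<in>{1..n}. fact (e l) * fact l ^ e l) = (fact k * fact i ^ k :: nat)" .
      have p2: "(\<Prod>l\<in>{1..n}. (bseq i l :: 'a) ^ e l) = 1"
        by (intro prod.neutral) (simp add: e_def bseq_def)
      show ?thesis unfolding F_def p1 p2 by simp
    qed
    show ?thesis using mem Fe False by (simp add: PB_def)
  qed
  finally show ?thesis .
qed

lemma coeff_pCons01: "coeff ([:0, c:] - of_nat k :: 'a::comm_ring_1 poly) 0 = - of_nat k"
  "coeff ([:0, c:] - of_nat k :: 'a::comm_ring_1 poly) 1 = c"
  by (simp_all add: of_nat_poly)

lemma ff_coeffs:
  "coeff (\<Prod>i<k. [:0, c:] - of_nat i :: 'a::comm_ring_1 poly) 0 = (if k = 0 then 1 else 0) \<and>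
   coeff (\<Prod>i<k. [:0, c:] - of_nat i :: 'a poly) 1 = (if k = 0 then 0 else c * (-1) ^ (k - 1) * of_nat (fact (k - 1)))"
proof (induction k)
  case 0
  then show ?case by simp
next
  case (Suc k)
  let ?P = "\<Prod>i<k. [:0, c:] - of_nat i :: 'a poly"
  have P: "(\<Prod>i<Suc k. [:0, c:] - of_nat i :: 'a poly) = ?P * ([:0, c:] - of_nat k)" by simp
  have c0: "coeff (?P * ([:0, c:] - of_nat k)) 0 = coeff ?P 0 * (- of_nat k)"
    by (simp add: coeff_mult_0 coeff_pCons01 coeff_of_nat_0)
  have c1: "coeff (?P * ([:0, c:] - of_nat k)) 1 = coeff ?P 0 * c + coeff ?P 1 * (- of_nat k)"
    using coeff_mult_1[of ?P "[:0, c:] - of_nat k"] coeff_pCons01[of c k] by simp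
  show ?case
  proof (cases k)
    case 0
    then show ?thesis unfolding P c0 c1 using Suc.IH by simp
  next
    case (Suc m)
    then show ?thesis unfolding P c0 c1 using Suc.IH by (simp add: algebra_simps fact_Suc)
  qed
qed


lemma div_lemma:
  assumes i: "i \<ge> 1" and k: "k \<ge> 1"
  shows "(fact (i * k) div (fact k * fact i ^ k)) * fact (k - 1) = (fact (i * k) div (k * fact i ^ k) :: nat)"
proof -
  have "fact k * fact i ^ k dvd (fact (k * i) :: nat)" by (rule fact_block_dvd[OF i])
  then obtain Q where Q: "fact (i * k) = fact k * fact i ^ k * (Q :: nat)" by (auto simp: mult.commute elim!: dvdE)
  have fk: "fact k = k * (fact (k - 1) :: nat)" using k by (cases k) auto
  have pos1: "fact k * fact i ^ k > (0::nat)" by simp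
  have pos2: "k * fact i ^ k > (0::nat)" using k by simp
  have "fact (i * k) div (fact k * fact i ^ k) = Q" unfolding Q using pos1 by simp
  moreover have "fact (i * k) = (k * fact i ^ k) * (fact (k - 1) * Q)" unfolding Q fk by (simp add: mult_ac)
  then have "fact (i * k) div (k * fact i ^ k) = fact (k - 1) * Q" using pos2 by simp
  ultimately show ?thesis by simp
qed

lemma coeff1_power: "coeff ([:0, c:] ^ n :: 'a::comm_ring_1 poly) 1 = (if n = 1 then c else 0)"
proof (induction n)
  case 0
  then show ?case by simp
next
  case (Suc n)
  have "coeff ([:0, c:] ^ Suc n :: 'a poly) 1 = coeff [:0, c:] 0 * coeff ([:0, c:] ^ n) 1 + coeff [:0, c:] 1 * coeff ([:0, c:] ^ n) 0"
    by (simp only: power_Suc coeff_mult_1)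
  also have "\<dots> = c * 0 ^ n" by (simp add: coeff_0_power)
  finally show ?case by (cases n) simp_all
qed

definition GG :: "nat \<Rightarrow> 'a::comm_ring_1 \<Rightarrow> nat \<Rightarrow> 'a" where
  "GG i c n = (if i = 1 then (if n = 1 then c else 0)
     else if i dvd n \<and> n \<noteq> 0 then (-1) ^ (n div i - 1) * of_nat (fact n div (n div i * fact i ^ (n div i))) * c else 0)"

lemma hp_coeffs:
  assumes i: "i \<ge> 1"
  shows "coeff (hurwitz_pow (bseq i) [:0, c:] n) 0 = hurwitz_one n \<and>
         coeff (hurwitz_pow (bseq i) [:0, c:] n :: 'a::comm_ring_1 poly) 1 = GG i c n"
proof (cases "i = 1")
  case True
  have h: "hurwitz_pow (bseq i) [:0, c:] n = ([:0, c:] :: 'a poly) ^ n" unfolding True by (rule hpow_one)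
  show ?thesis unfolding h using True coeff1_power[of c n] by (simp add: coeff_0_power hurwitz_one_def GG_def zero_power)
next
  case False
  then have i2: "i \<ge> 2" using i by simp
  let ?P = "\<lambda>k. (\<Prod>i<k. [:0, c:] - of_nat i :: 'a poly)"
  have hp: "hurwitz_pow (bseq i) [:0, c:] n = (\<Sum>k\<le>n. smult (of_nat (PB i n k)) (?P k))"
    unfolding hurwitz_pow_def pb_bseq[OF i2] of_nat_mult_smult by simp
  have c0: "coeff (hurwitz_pow (bseq i) [:0, c:] n) 0 = (\<Sum>k\<le>n. of_nat (PB i n k) * (if k = 0 then 1 else 0))"
    unfolding hp coeff_sum coeff_smult by (simp only: ff_coeffs)
  also have "\<dots> = of_nat (PB i n 0)" by (simp add: sum.atMost_shift)
  also have "\<dots> = hurwitz_one n" by (simp add: PB_def hurwitz_one_def)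
  finally have C0: "coeff (hurwitz_pow (bseq i) [:0, c:] n) 0 = hurwitz_one n" .
  have c1: "coeff (hurwitz_pow (bseq i) [:0, c:] n) 1 = (\<Sum>k\<le>n. of_nat (PB i n k) *
      (if k = 0 then 0 else c * (-1) ^ (k - 1) * of_nat (fact (k - 1))))"
    unfolding hp coeff_sum coeff_smult by (simp only: ff_coeffs)
  have C1: "coeff (hurwitz_pow (bseq i) [:0, c:] n) 1 = GG i c n"
  proof (cases "i dvd n \<and> n \<noteq> 0")
    case True
    define k0 where "k0 = n div i"
    have n: "n = i * k0" using True by (simp add: k0_def)
    have k0: "k0 \<ge> 1" using True n by (cases k0) auto
    have k0n: "k0 \<le> n" by (simp add: k0_def)
    have "coeff (hurwitz_pow (bseq i) [:0, c:] n) 1 = (\<Sum>k\<le>n. if k = k0 then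
        of_nat (fact n div (fact k0 * fact i ^ k0)) * (c * (-1) ^ (k0 - 1) * of_nat (fact (k0 - 1))) else 0)"
      unfolding c1
    proof (intro sum.cong refl)
      fix k assume "k \<in> {..n}"
      show "of_nat (PB i n k) * (if k = 0 then 0 else c * (-1) ^ (k - 1) * of_nat (fact (k - 1))) =
        (if k = k0 then of_nat (fact n div (fact k0 * fact i ^ k0)) * (c * (-1) ^ (k0 - 1) * of_nat (fact (k0 - 1))) else 0)"
      proof (cases "k = k0")
        case True
        then show ?thesis using k0 n by (simp add: PB_def)
      next
        case False
        have "n \<noteq> i * k" using False n i2 by simp
        then show ?thesis using False by (simp add: PB_def)
      qed
    qed
    also have "\<dots> = of_nat (fact n div (fact k0 * fact i ^ k0)) * (c * (-1) ^ (k0 - 1) * of_nat (fact (k0 - 1)))"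
      using k0n by (simp add: sum.delta)
    also have "\<dots> = (-1) ^ (k0 - 1) * of_nat (fact n div (fact k0 * fact i ^ k0) * fact (k0 - 1)) * c"
      by (simp add: mult_ac)
    also have "\<dots> = (-1) ^ (k0 - 1) * of_nat (fact n div (k0 * fact i ^ k0)) * c"
      unfolding n using div_lemma[OF i k0] by simp
    also have "\<dots> = GG i c n" using True False by (simp add: GG_def k0_def)
    finally show ?thesis .
  next
    case nd: False
    have "coeff (hurwitz_pow (bseq i) [:0, c:] n) 1 = (\<Sum>k\<le>n. (0::'a))"
      unfolding c1
    proof (intro sum.cong refl)
      fix k assume "k \<in> {..n}"
      show "of_nat (PB i n k) * (if k = 0 then 0 else c * (-1) ^ (k - 1) * of_nat (fact (k - 1))) = 0"
      proof (cases "k = 0")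
        case True then show ?thesis by simp
      next
        case False
        have "n \<noteq> i * k" using False nd i2 by auto
        then show ?thesis using False by (simp add: PB_def)
      qed
    qed
    then show ?thesis using nd False by (auto simp: GG_def)
  qed
  show ?thesis using C0 C1 by simp
qed


lemma xseq_eq: "xseq u n = [:0, u n:]"
  by (simp add: xseq_def)

lemma coeff_q: "coeff (tau (xseq u) m) 1 = (\<Sum>i\<in>{1..max 1 m}. GG i (u (i - 1)) m)"
proof -
  define N where "N = max 1 m"
  define f where "f = (\<lambda>i. hurwitz_pow (bseq i) (xseq u (i - 1)) :: nat \<Rightarrow> 'a::comm_ring_1 poly)"
  have t: "tau (xseq u) m = hurwitz_prod_list (map f [1..<N+1]) m"
    by (simp add: tau_def tau_partial_def N_def f_def)
  have f0: "coeff (a n) 0 = hurwitz_one n" if "a \<in> set (map f [1..<N+1])" for a n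
  proof -
    from that obtain i where i0: "i \<in> set [1..<N+1]" "a = f i" by auto
    then have i: "i \<ge> 1" "a = f i" by auto
    show ?thesis using hp_coeffs[OF i(1), of "u (i - 1)" n] i by (simp add: f_def xseq_eq)
  qed
  have "coeff (tau (xseq u) m) 1 = (\<Sum>a\<leftarrow>map f [1..<N+1]. coeff (a m) 1)"
    unfolding t using hprod_list_coeff[of "map f [1..<N+1]" m] f0 by blast
  also have "\<dots> = (\<Sum>i\<leftarrow>[1..<N+1]. GG i (u (i - 1)) m)"
  proof -
    have "map (\<lambda>a. coeff (a m) 1) (map f [1..<N+1]) = map (\<lambda>i. GG i (u (i - 1)) m) [1..<N+1]"
      using hp_coeffs by (auto simp: f_def xseq_eq)
    then show ?thesis by (rule arg_cong)
  qed
  also have "\<dots> = (\<Sum>i\<in>{1..N}. GG i (u (i - 1)) m)"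
    by (simp only: interv_sum_list_conv_sum_set_nat set_upt Suc_eq_plus1[symmetric] atLeastLessThanSuc_atLeastAtMost)
  finally show ?thesis by (simp add: N_def)
qed

theorem mainTheorem11:
  fixes u :: "nat \<Rightarrow> 'a::comm_ring_1"
    and q :: "nat \<Rightarrow> 'a poly"
  assumes q_def: "q = tau (xseq u)"
  shows "u 0 = coeff (q 1) 1
    \<and> (\<forall>m\<ge>2. u (m - 1) = coeff (q m) 1 +
          (\<Sum>k\<in>{k. k dvd m \<and> k \<noteq> 1 \<and> k \<noteq> m}.
             (- 1) ^ (m div k) * of_nat (fact m div ((m div k) * fact k ^ (m div k))) * u (k - 1)))
    \<and> (\<forall>p::nat. prime p \<longrightarrow> u (p - 1) = coeff (q p) 1)"
proof -
  have cq: "coeff (q m) 1 = (\<Sum>i\<in>{1..max 1 m}. GG i (u (i - 1)) m)" for m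
    unfolding q_def by (rule coeff_q)
  have P1: "u 0 = coeff (q 1) 1" unfolding cq by (simp add: GG_def)
  have P2: "u (m - 1) = coeff (q m) 1 +
          (\<Sum>k\<in>{k. k dvd m \<and> k \<noteq> 1 \<and> k \<noteq> m}.
             (- 1) ^ (m div k) * of_nat (fact m div ((m div k) * fact k ^ (m div k))) * u (k - 1))"
    if m: "m \<ge> 2" for m
  proof -
    define K where "K = {k. k dvd m \<and> k \<noteq> 1 \<and> k \<noteq> m}"
    define H where "H = (\<lambda>i. (-1) ^ (m div i - 1) * of_nat (fact m div (m div i * fact i ^ (m div i))) * u (i - 1))"
    define T where "T = (\<lambda>k. (- 1) ^ (m div k) * of_nat (fact m div ((m div k) * fact k ^ (m div k))) * u (k - 1))"
    have KS: "{i\<in>{2..m}. i dvd m} = insert m K"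
    proof
      show "{i\<in>{2..m}. i dvd m} \<subseteq> insert m K" by (auto simp: K_def)
      show "insert m K \<subseteq> {i\<in>{2..m}. i dvd m}"
      proof
        fix k assume k: "k \<in> insert m K"
        show "k \<in> {i\<in>{2..m}. i dvd m}"
        proof (cases "k = m")
          case True then show ?thesis using m by simp
        next
          case False
          then have kd: "k dvd m" "k \<noteq> 1" using k by (auto simp: K_def)
          have "k \<noteq> 0"
          proof
            assume "k = 0"
            with kd have "m = 0" by simp
            with m show False by simp
          qed
          moreover have "k \<le> m" using kd m by (intro dvd_imp_le) auto
          ultimately show ?thesis using kd by auto
        qed
      qed
    qed
    have "finite (insert m K)" unfolding KS[symmetric] by simp
    then have finK: "finite K" by simp
    have mK: "m \<notin> K" by (simp add: K_def)
    have "coeff (q m) 1 = (\<Sum>i\<in>{1..m}. GG i (u (i - 1)) m)" using cq m by simp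
    also have "\<dots> = GG 1 (u 0) m + (\<Sum>i\<in>{2..m}. GG i (u (i - 1)) m)"
      using m by (simp add: sum.atLeast_Suc_atMost numeral_2_eq_2)
    also have "GG 1 (u 0) m = 0" using m by (simp add: GG_def)
    also have "(\<Sum>i\<in>{2..m}. GG i (u (i - 1)) m) = (\<Sum>i\<in>{2..m}. if i dvd m then H i else 0)"
      by (intro sum.cong refl) (use m in \<open>auto simp: GG_def H_def\<close>)
    also have "\<dots> = (\<Sum>i\<in>{i\<in>{2..m}. i dvd m}. H i)" by (rule sum.inter_filter[symmetric]) simp
    also have "\<dots> = H m + (\<Sum>i\<in>K. H i)" unfolding KS using finK mK by simp
    also have "H m = u (m - 1)" using m by (simp add: H_def)
    also have "(\<Sum>i\<in>K. H i) = - (\<Sum>i\<in>K. T i)"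
    proof -
      have "H i = - T i" if "i \<in> K" for i
      proof -
        have d: "i dvd m" "i \<noteq> 0" using that m by (auto simp: K_def dvd_0_left_iff)
        have "m div i \<noteq> 0"
        proof
          assume "m div i = 0"
          then have "m = 0" using d(1) by (metis dvd_div_mult_self mult_zero_left)
          with m show False by simp
        qed
        then obtain j where "m div i = Suc j" by (cases "m div i") auto
        then show ?thesis by (simp add: H_def T_def)
      qed
      then show ?thesis by (simp add: sum_negf)
    qed
    finally have "coeff (q m) 1 = 0 + (u (m - 1) + - sum T K)" .
    then show ?thesis unfolding K_def[symmetric] T_def[symmetric] by simp
  qed
  have P3: "u (p - 1) = coeff (q p) 1" if p: "prime p" for p :: nat
  proof -
    have p2: "p \<ge> 2" using prime_ge_2_nat[OF p] .
    have e: "{k. k dvd p \<and> k \<noteq> 1 \<and> k \<noteq> p} = {}" using p by (auto simp: prime_nat_iff)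
    show ?thesis using P2[OF p2] unfolding e by simp
  qed
  show ?thesis using P1 P2 P3 by blast
qed

end
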